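(* Let $(D, \{ \prec_\alpha, \succ_\alpha, \curlyvee_{\alpha, \beta} \}_{\alpha, \beta \in \Omega})$ be an NS-family algebra. Then $(D, \{ \ast_{\alpha, \beta} \}_{\alpha, \beta \in \Omega})$ is an $\Omega$-associative algebra, where $x \ast_{\alpha, \beta} y = x \prec_\beta y + x \succ_\alpha y + x \curlyvee_{\alpha, \beta} y$.
   Context: $\Omega$ is a semigroup. An NS-family algebra is a vector space $D$ with bilinear maps $\{ \prec_\alpha, \succ_\alpha, \curlyvee_{\alpha, \beta}\}_{\alpha, \beta \in \Omega}$ such that for all $x,y,z$, $\alpha,\beta,\gamma$: (1) $(x \prec_\alpha y) \prec_\beta z = x \prec_{\alpha \beta} ( y \prec_\beta z + y \succ_\alpha z + y \curlyvee_{\alpha, \beta} z)$; (2) $(x \succ_\alpha y) \prec_\beta z = x \succ_\alpha (y \prec_\beta z)$; (3) $(x \prec_\beta y + x \succ_\alpha y + x \curlyvee_{\alpha, \beta} y) \succ_{\alpha \beta} z = x \succ_\alpha (y \succ_\beta z)$; (4) $( x \prec_\beta y + x \succ_\alpha y + x \curlyvee_{\alpha, \beta} y ) \curlyvee_{\alpha \beta, \gamma} z + (x \curlyvee_{\alpha, \beta} y) \prec_\gamma z = x \succ_\alpha (y \curlyvee_{\beta, \gamma} z) + x \curlyvee_{\alpha, \beta \gamma} ( y \prec_\gamma z + y \succ_\beta z + y \curlyvee_{\beta, \gamma} z )$. An $\Omega$-associative algebra is a vector space $B$ with bilinear maps $\{\cdot_{\alpha,\beta}\}_{\alpha,\beta\in\Omega}$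 such that $(a \cdot_{\alpha , \beta} b) \cdot_{\alpha \beta, \gamma} c = a \cdot_{\alpha, \beta \gamma} (b \cdot_{\beta, \gamma} c)$ for all $a,b,c\in B$, $\alpha,\beta,\gamma\in\Omega$. *)

theory Defs
  imports "HOL-Analysis.Analysis"
begin

definition bilinear_map :: "('k::field \<Rightarrow> 'v::ab_group_add \<Rightarrow> 'v) \<Rightarrow> ('v \<Rightarrow> 'v \<Rightarrow> 'v) \<Rightarrow> bool" where
  "bilinear_map smul m \<longleftrightarrow>
     (\<forall>x y z. m (x + y) z = m x z + m y z) \<and>
     (\<forall>x y z. m x (y + z) = m x y + m x z) \<and>
     (\<forall>c x y. m (smul c x) y = smul c (m x y)) \<and>
     (\<forall>c x y. m x (smul c y) = smul c (m x y))"

definition NS_family_algebra ::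
  "('k::field \<Rightarrow> 'v::ab_group_add \<Rightarrow> 'v)
   \<Rightarrow> ('o::semigroup_mult \<Rightarrow> 'v \<Rightarrow> 'v \<Rightarrow> 'v)
   \<Rightarrow> ('o \<Rightarrow> 'v \<Rightarrow> 'v \<Rightarrow> 'v)
   \<Rightarrow> ('o \<Rightarrow> 'o \<Rightarrow> 'v \<Rightarrow> 'v \<Rightarrow> 'v) \<Rightarrow> bool" where
  "NS_family_algebra smul prec succ curly \<longleftrightarrow>
     vector_space smul \<and>
     (\<forall>a. bilinear_map smul (prec a)) \<and>
     (\<forall>a. bilinear_map smul (succ a)) \<and>
     (\<forall>a b. bilinear_map smul (curly a b)) \<and>
     (\<forall>x y z a b. prec b (prec a x y) z
        = prec (a * b) x (prec b y z + succ a y z + curly a b y z)) \<and>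
     (\<forall>x y z a b. prec b (succ a x y) z = succ a x (prec b y z)) \<and>
     (\<forall>x y z a b. succ (a * b) (prec b x y + succ a x y + curly a b x y) z
        = succ a x (succ b y z)) \<and>
     (\<forall>x y z a b c.
        curly (a * b) c (prec b x y + succ a x y + curly a b x y) z + prec c (curly a b x y) z
        = succ a x (curly b c y z) + curly a (b * c) x (prec c y z + succ b y z + curly b c y z))"

definition Omega_associative_algebra ::
  "('k::field \<Rightarrow> 'v::ab_group_add \<Rightarrow> 'v) \<Rightarrow> ('o::semigroup_mult \<Rightarrow> 'o \<Rightarrow> 'v \<Rightarrow> 'v \<Rightarrow> 'v) \<Rightarrow> bool" where
  "Omega_associative_algebra smul dot \<longleftrightarrow>
     vector_space smul \<and>
     (\<forall>a b. bilinear_map smul (dot a b)) \<and>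
     (\<forall>x y z a b c. dot (a * b) c (dot a b x y) z = dot a (b * c) x (dot b c y z))"

end

theory Submission
  imports Defs
begin

theorem proposition4p2:
  fixes smul :: "'k::field \<Rightarrow> 'v::ab_group_add \<Rightarrow> 'v"
    and prec succ :: "'o::semigroup_mult \<Rightarrow> 'v \<Rightarrow> 'v \<Rightarrow> 'v"
    and curly :: "'o \<Rightarrow> 'o \<Rightarrow> 'v \<Rightarrow> 'v \<Rightarrow> 'v"
  assumes "NS_family_algebra smul prec succ curly"
  shows "Omega_associative_algebra smul
           (\<lambda>a b x y. prec b x y + succ a x y + curly a b x y)"
proof -
  note A = assms[unfolded NS_family_algebra_def]
  have vs: "vector_space smul" using A by simp
  have bp: "\<And>a. bilinear_map smul (prec a)" using A by simp
  have bs: "\<And>a. bilinear_map smul (succ a)" using A by simp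
  have bc: "\<And>a b. bilinear_map smul (curly a b)" using A by simp
  have e1: "\<And>x y z a b. prec b (prec a x y) z
        = prec (a * b) x (prec b y z + succ a y z + curly a b y z)" using A by simp
  have e2: "\<And>x y z a b. prec b (succ a x y) z = succ a x (prec b y z)" using A by simp
  have e3: "\<And>x y z a b. succ (a * b) (prec b x y + succ a x y + curly a b x y) z
        = succ a x (succ b y z)" using A by simp
  have e4: "\<And>x y z a b c.
        curly (a * b) c (prec b x y + succ a x y + curly a b x y) z + prec c (curly a b x y) z
        = succ a x (curly b c y z) + curly a (b * c) x (prec c y z + succ b y z + curly b c y z)"
    using A by simp
  have padd: "\<And>a u v w. prec a (u + v) w = prec a u w + prec a v w"
    using bp unfolding bilinear_map_def by blast
  have sadd: "\<And>a u v w. succ a u (v + w) = succ a u v + succ a u w"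
    using bs unfolding bilinear_map_def by blast
  have bil: "bilinear_map smul (\<lambda>x y. prec b x y + succ a x y + curly a b x y)" for a b
  proof -
    have d: "\<And>c u v. smul c (u + v) = smul c u + smul c v"
      using vs by (simp add: vector_space_def module.scale_right_distrib)
    show ?thesis using bp[of b] bs[of a] bc[of a b] unfolding bilinear_map_def
      by (simp add: d algebra_simps)
  qed
  have assoc: "prec c (prec b x y + succ a x y + curly a b x y) z
      + succ (a*b) (prec b x y + succ a x y + curly a b x y) z
      + curly (a*b) c (prec b x y + succ a x y + curly a b x y) z
    = prec (b*c) x (prec c y z + succ b y z + curly b c y z)
      + succ a x (prec c y z + succ b y z + curly b c y z)
      + curly a (b*c) x (prec c y z + succ b y z + curly b c y z)" for a b c x y z
  proof -
    have "prec c (prec b x y + succ a x y + curly a b x y) z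
        = prec (b*c) x (prec c y z + succ b y z + curly b c y z) + succ a x (prec c y z)
          + prec c (curly a b x y) z"
      by (simp add: padd e1 e2)
    moreover have "succ a x (prec c y z + succ b y z + curly b c y z)
        = succ a x (prec c y z) + succ a x (succ b y z) + succ a x (curly b c y z)"
      by (simp add: sadd)
    ultimately show ?thesis using e3[where x=x and y=y and z=z and a=a and b=b] e4[where x=x and y=y and z=z and a=a and b=b and c=c]
      by (simp add: algebra_simps)
  qed
  show ?thesis unfolding Omega_associative_algebra_def
    using vs bil assoc by (simp add: mult.assoc)
qed

end
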